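(* Let $\varphi(z)=\dfrac{1+z}{\cos z}$. A function $f\in\mathcal{A}$ belongs to $\mathcal{S}^*_{nc}$ if and only if $$\frac1z\left[f(z)*\frac{z-\varphi(e^{i\theta})(z-z^2)}{(1-z)^2}\right]\ne0\qquad\text{for all } z\in\mathbb{D},\ \theta\in[-\pi,\pi].$$
   Context: $\mathbb{D}$ is the open unit disk. $\mathcal{A}$ is the class of analytic $f$ on $\mathbb{D}$ with $f(0)=0$, $f'(0)=1$. For analytic $f,g$ on $\mathbb{D}$, $f\prec g$ means $f=g\circ\omega$ for some analytic $\omega:\mathbb{D}\to\mathbb{D}$ with $\omega(0)=0$. $\mathcal{S}^*_{nc}=\{f\in\mathcal{A}: zf'(z)/f(z)\prec (1+z)/\cos z\}$. For $f(z)=\sum a_nz^n$ and $g(z)=\sum b_nz^n$ analytic in $\mathbb{D}$, $f*g$ denotes the Hadamard product (convolution) $(f*g)(z)=\sum a_nb_nz^n$; the expression $\frac1z[\cdots]$ is understood at $z=0$ by its analytic extension. *)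

theory Defs
  imports "HOL-Complex_Analysis.Complex_Analysis"
begin

definition classA :: "(complex \<Rightarrow> complex) set" where
  "classA = {f. f holomorphic_on ball 0 1 \<and> f 0 = 0 \<and> deriv f 0 = 1}"

definition subord :: "(complex \<Rightarrow> complex) \<Rightarrow> (complex \<Rightarrow> complex) \<Rightarrow> bool" where
  "subord f g \<longleftrightarrow> (\<exists>\<omega>. \<omega> holomorphic_on ball 0 1 \<and> \<omega> ` ball 0 1 \<subseteq> ball 0 1 \<and> \<omega> 0 = 0
      \<and> (\<forall>z\<in>ball 0 1. f z = g (\<omega> z)))"

definition phi_nc :: "complex \<Rightarrow> complex" where
  "phi_nc z = (1 + z) / cos z"

definition logderiv_quot :: "(complex \<Rightarrow> complex) \<Rightarrow> complex \<Rightarrow> complex" where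
  "logderiv_quot f z = (if z = 0 then 1 else z * deriv f z / f z)"

definition S_star_nc :: "(complex \<Rightarrow> complex) set" where
  "S_star_nc = {f. f \<in> classA \<and> subord (logderiv_quot f) phi_nc}"

definition tcoeff :: "(complex \<Rightarrow> complex) \<Rightarrow> nat \<Rightarrow> complex" where
  "tcoeff f n = (deriv ^^ n) f 0 / fact n"

definition hadamard :: "(complex \<Rightarrow> complex) \<Rightarrow> (complex \<Rightarrow> complex) \<Rightarrow> complex \<Rightarrow> complex" where
  "hadamard f g z = (\<Sum>n. tcoeff f n * tcoeff g n * z ^ n)"

text \<open>(1/z) h(z), understood at z = 0 by its analytic extension (value h'(0), as h(0)=0 here).\<close>
definition div_z :: "(complex \<Rightarrow> complex) \<Rightarrow> complex \<Rightarrow> complex" where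
  "div_z h z = (if z = 0 then deriv h 0 else h z / z)"

end

theory Submission
  imports Defs
begin

definition inI :: "real \<Rightarrow> real \<times> real \<Rightarrow> bool" where
  "inI v I \<longleftrightarrow> fst I \<le> v \<and> v \<le> snd I"

definition imul :: "real \<times> real \<Rightarrow> real \<times> real \<Rightarrow> real \<times> real" where
  "imul I J = (min (min (fst I * fst J) (fst I * snd J)) (min (snd I * fst J) (snd I * snd J)),
               max (max (fst I * fst J) (fst I * snd J)) (max (snd I * fst J) (snd I * snd J)))"

definition iadd :: "real \<times> real \<Rightarrow> real \<times> real \<Rightarrow> real \<times> real" where
  "iadd I J = (fst I + fst J, snd I + snd J)"

definition isub :: "real \<times> real \<Rightarrow> real \<times> real \<Rightarrow> real \<times> real" where
  "isub I J = (fst I - snd J, snd I - fst J)"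

lemma iadd_sound: "inI x I \<Longrightarrow> inI y J \<Longrightarrow> inI (x + y) (iadd I J)"
  by (auto simp: inI_def iadd_def)

lemma isub_sound: "inI x I \<Longrightarrow> inI y J \<Longrightarrow> inI (x - y) (isub I J)"
  by (auto simp: inI_def isub_def)

lemma mul_between:
  fixes a b y x :: real
  assumes "a \<le> x" "x \<le> b"
  shows "min (a*y) (b*y) \<le> x*y \<and> x*y \<le> max (a*y) (b*y)"
proof (cases "0 \<le> y")
  case True
  then have "a*y \<le> x*y" "x*y \<le> b*y" using assms by (auto intro: mult_right_mono)
  then show ?thesis by auto
next
  case False
  then have "b*y \<le> x*y" "x*y \<le> a*y" using assms by (auto intro: mult_right_mono_neg)
  then show ?thesis by auto
qed

lemma imul_sound: "inI x I \<Longrightarrow> inI y J \<Longrightarrow> inI (x * y) (imul I J)"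
proof -
  assume x: "inI x I" and y: "inI y J"
  obtain a b where I: "I = (a,b)" by force
  obtain c d where J: "J = (c,d)" by force
  have xa: "a \<le> x" "x \<le> b" using x I by (auto simp: inI_def)
  have yc: "c \<le> y" "y \<le> d" using y J by (auto simp: inI_def)
  have 1: "min (a*y) (b*y) \<le> x*y \<and> x*y \<le> max (a*y) (b*y)" using mul_between[OF xa] .
  have 2: "min (c*a) (d*a) \<le> y*a \<and> y*a \<le> max (c*a) (d*a)" using mul_between[OF yc] .
  have 3: "min (c*b) (d*b) \<le> y*b \<and> y*b \<le> max (c*b) (d*b)" using mul_between[OF yc] .
  show ?thesis using 1 2 3 unfolding I J inI_def imul_def
    by (simp add: mult.commute min_def max_def split: if_splits) linarith?
qed

definition Ef :: "real \<Rightarrow> real \<Rightarrow> real \<Rightarrow> real \<Rightarrow> real \<Rightarrow> real \<Rightarrow> real" where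
  "Ef x y a b hc hs = ((a*a + hs*hs) + (1+x)*(a*b) - y*(hc*hs))*(a*hc) - ((1+x)*(hc*hs) + y*(a*b))*(b*hs)"

definition IE where
  "IE X Y A B CH SH = isub (imul (isub (iadd (iadd (imul A A) (imul SH SH)) (imul (iadd (1,1) X) (imul A B))) (imul Y (imul CH SH))) (imul A CH))
     (imul (iadd (imul (iadd (1,1) X) (imul CH SH)) (imul Y (imul A B))) (imul B SH))"

lemma IE_sound:
  assumes "inI x X" "inI y Y" "inI a A" "inI b B" "inI hc CH" "inI hs SH"
  shows "inI (Ef x y a b hc hs) (IE X Y A B CH SH)"
  unfolding Ef_def IE_def
  by (intro isub_sound iadd_sound imul_sound assms) (auto simp: inI_def)


lemma lt8: "{..<8::nat} = {0,1,2,3,4,5,6,7}" by auto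

definition cP :: "real \<Rightarrow> real" where
  "cP t = 1 + t^2*(-1/2 + t^2*(1/24 - t^2/720))"
definition sP :: "real \<Rightarrow> real" where
  "sP t = t*(1 + t^2*(-1/6 + t^2*(1/120 - t^2/5040)))"
definition eP :: "real \<Rightarrow> real" where
  "eP t = 1 + t*(1 + t*(1/2 + t*(1/6 + t*(1/24 + t*(1/120 + t*(1/720 + t/5040))))))"

lemma cos_taylor: "\<bar>cos t - cP t\<bar> \<le> t^8/40320"
proof -
  obtain s where s: "cos t = (\<Sum>m<8. cos_coeff m * t ^ m) + (cos(s + 1/2 * real 8 * pi) / fact 8) * t ^ 8"
    using Maclaurin_cos_expansion[of t 8] by blast
  have sum: "(\<Sum>m<8. cos_coeff m * t ^ m) = cP t"
    unfolding lt8 by (simp add: cP_def cos_coeff_def fact_numeral algebra_simps power2_eq_square power_def)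
  have "\<bar>cos(s + 1/2 * real 8 * pi) / fact 8 * t ^ 8\<bar> \<le> 1 / fact 8 * t^8"
    using mult_right_mono[OF abs_cos_le_one, of "t^8" "s + 1/2 * real 8 * pi"]
    by (simp add: abs_mult divide_simps)
  then show ?thesis using s sum by (simp add: fact_numeral)
qed

lemma sin_taylor: "\<bar>sin t - sP t\<bar> \<le> t^8/40320"
proof -
  have sum: "(\<Sum>m<8. sin_coeff m * t ^ m) = sP t"
    unfolding lt8 by (simp add: sP_def sin_coeff_def fact_numeral algebra_simps power2_eq_square power_def)
  show ?thesis using Maclaurin_sin_bound[of t 8] unfolding sum by (simp add: fact_numeral power_abs)
qed

lemma exp_taylor: assumes "\<bar>t\<bar> \<le> 1" shows "\<bar>exp t - eP t\<bar> \<le> 3 * t^8/40320"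
proof -
  obtain s where s: "\<bar>s\<bar> \<le> \<bar>t\<bar>" "exp t = (\<Sum>m<8. (t ^ m) / fact m) + (exp s / fact 8) * t ^ 8"
    using Maclaurin_exp_le[of t 8] by blast
  have sum: "(\<Sum>m<8. t ^ m / fact m) = eP t"
    unfolding lt8 by (simp add: eP_def fact_numeral algebra_simps power_def)
  have "exp s \<le> 3" using s(1) assms exp_le by (smt (verit) exp_le_cancel_iff)
  then have "\<bar>exp s / fact 8 * t ^ 8\<bar> \<le> 3 / fact 8 * t^8"
    by (auto simp: abs_mult divide_simps intro!: mult_right_mono)
  then show ?thesis using s sum by (simp add: fact_numeral)
qed


lemma cosh_exp: "cosh (y::real) = (exp y + exp (-y))/2" by (simp add: cosh_def)
lemma sinh_exp: "sinh (y::real) = (exp y - exp (-y))/2" by (simp add: sinh_def)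

lemma piece_gen:
 fixes x y xa xb al au bl bu yl yu chl chu shl shu :: real
 assumes x: "xa \<le> x" "x \<le> xb" "-1 \<le> xa" "xb \<le> 1" and y: "0 \<le> y" "x^2 + y^2 = 1"
  and ca: "al \<le> cP xa - xa^8/40320" "al \<le> cP xb - xb^8/40320"
  and cb: "(if 0 \<le> xa then cP xa + xa^8/40320 else if xb \<le> 0 then cP xb + xb^8/40320 else 1) \<le> au"
  and sa: "bl \<le> sP xa - xa^8/40320" "sP xb + xb^8/40320 \<le> bu"
  and ya: "0 \<le> yl" "yl^2 \<le> 1 - max (xa^2) (xb^2)"
  and yb: "1 - (if 0 \<le> xa then xa^2 else if xb \<le> 0 then xb^2 else 0) \<le> yu^2" "0 \<le> yu" "yu \<le> 1"
  and cha: "chl \<le> (eP yl - 3*yl^8/40320 + eP (-yl) - 3*yl^8/40320)/2"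
  and chb: "(eP yu + 3*yu^8/40320 + eP (-yu) + 3*yu^8/40320)/2 \<le> chu"
  and sha: "shl \<le> (eP yl - 3*yl^8/40320 - eP (-yl) - 3*yl^8/40320)/2"
  and shb: "(eP yu + 3*yu^8/40320 - eP (-yu) + 3*yu^8/40320)/2 \<le> shu"
  and pos: "0 < fst (IE (xa,xb) (yl,yu) (al,au) (bl,bu) (chl,chu) (shl,shu))"
 shows "0 < Ef x y (cos x) (sin x) (cosh y) (sinh y)"
proof -
  have pi1: "1 \<le> pi/2" using pi_ge_two by linarith
  have iX: "inI x (xa,xb)" using x by (simp add: inI_def)
  have ct: "cP t - t^8/40320 \<le> cos t" "cos t \<le> cP t + t^8/40320" for t
    using cos_taylor[of t] by linarith+
  have st: "sP t - t^8/40320 \<le> sin t" "sin t \<le> sP t + t^8/40320" for t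
    using sin_taylor[of t] by linarith+
  have et: "eP t - 3*t^8/40320 \<le> exp t" "exp t \<le> eP t + 3*t^8/40320" if "\<bar>t\<bar> \<le> 1" for t
    using exp_taylor[OF that] by linarith+
  have cmin: "min (cos xa) (cos xb) \<le> cos x"
  proof (cases "0 \<le> x")
    case True
    then have "cos xb \<le> cos x" using x pi_ge_two by (intro cos_monotone_0_pi_le) auto
    then show ?thesis by simp
  next
    case False
    then have "cos (-xa) \<le> cos (-x)" using x pi_ge_two by (intro cos_monotone_0_pi_le) auto
    then show ?thesis by simp
  qed
  have "al \<le> cos x" using cmin ca ct[of xa] ct[of xb] by linarith
  moreover have "cos x \<le> au"
  proof -
    consider "0 \<le> xa" | "\<not> 0 \<le> xa" "xb \<le> 0" | "\<not> 0 \<le> xa" "\<not> xb \<le> 0" by blast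
    then show ?thesis
    proof cases
      case 1
      then have "cos x \<le> cos xa" using x pi_ge_two by (intro cos_monotone_0_pi_le) auto
      then show ?thesis using cb 1 ct[of xa] by simp
    next
      case 2
      then have "cos (-x) \<le> cos (-xb)" using x pi_ge_two by (intro cos_monotone_0_pi_le) auto
      then show ?thesis using cb 2 ct[of xb] by simp
    next
      case 3
      then have "1 \<le> au" using cb by simp
      then show ?thesis using cos_le_one[of x] by linarith
    qed
  qed
  ultimately have iA: "inI (cos x) (al,au)" by (simp add: inI_def)
  have "sin xa \<le> sin x" "sin x \<le> sin xb" using x pi1 by (auto intro!: sin_monotone_2pi_le)
  then have iB: "inI (sin x) (bl,bu)" using sa st[of xa] st[of xb] by (simp add: inI_def)
  have x2: "x^2 \<le> max (xa^2) (xb^2)"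
  proof (cases "0 \<le> x")
    case True then have "x^2 \<le> xb^2" using x by (intro power_mono) auto
    then show ?thesis by simp
  next
    case False then have "(-x)^2 \<le> (-xa)^2" using x by (intro power_mono) auto
    then show ?thesis by simp
  qed
  have x3: "(if 0 \<le> xa then xa^2 else if xb \<le> 0 then xb^2 else 0) \<le> x^2"
  proof -
    consider "0 \<le> xa" | "\<not> 0 \<le> xa" "xb \<le> 0" | "\<not> 0 \<le> xa" "\<not> xb \<le> 0" by blast
    then show ?thesis
    proof cases
      case 1 then have "xa^2 \<le> x^2" using x by (intro power_mono) auto
      then show ?thesis using 1 by simp
    next
      case 2 then have "(-xb)^2 \<le> (-x)^2" using x by (intro power_mono) auto
      then show ?thesis using 2 by simp
    qed auto
  qed
  have "yl^2 \<le> y^2" using ya x2 y by linarith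
  then have yl: "yl \<le> y" using ya y by (meson power2_le_imp_le)
  have "y^2 \<le> yu^2" using yb x3 y by linarith
  then have yu: "y \<le> yu" using yb y by (meson power2_le_imp_le)
  have iY: "inI y (yl,yu)" using yl yu by (simp add: inI_def)
  have ylu: "\<bar>yl\<bar> \<le> 1" "\<bar>yu\<bar> \<le> 1" "\<bar>-yl\<bar> \<le> 1" "\<bar>-yu\<bar> \<le> 1" using ya yb yl yu by auto
  have "cosh yl \<le> cosh y" "cosh y \<le> cosh yu" using yl yu ya y by (auto simp: cosh_real_nonneg_le_iff)
  then have iCH: "inI (cosh y) (chl,chu)" using cha chb et[OF ylu(1)] et[OF ylu(2)] et[OF ylu(3)] et[OF ylu(4)]
    unfolding inI_def cosh_exp by simp
  have "sinh yl \<le> sinh y" "sinh y \<le> sinh yu" using yl yu by auto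
  then have iSH: "inI (sinh y) (shl,shu)" using sha shb et[OF ylu(1)] et[OF ylu(2)] et[OF ylu(3)] et[OF ylu(4)]
    unfolding inI_def sinh_exp by simp
  have "inI (Ef x y (cos x) (sin x) (cosh y) (sinh y)) (IE (xa,xb) (yl,yu) (al,au) (bl,bu) (chl,chu) (shl,shu))"
    by (rule IE_sound[OF iX iY iA iB iCH iSH])
  then show ?thesis using pos by (simp add: inI_def)
qed



lemma piece_0: "(- 1) \<le> x \<Longrightarrow> x \<le> (- 0.940) \<Longrightarrow> 0 \<le> y \<Longrightarrow> x^2 + y^2 = 1 \<Longrightarrow> 0 < Ef x y (cos x) (sin x) (cosh y) (sinh y)"
  by (rule piece_gen[where xa="(- 1)" and xb="(- 0.940)" and al="0.540" and au="0.590" and bl="(- 0.842)" and bu="(- 0.807)" and yl="0" and yu="0.342" and chl="1" and chu="1.060" and shl="0" and shu="0.349"]) (simp_all add: cP_def sP_def eP_def IE_def imul_def iadd_def isub_def power_divide)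

lemma piece_1: "(- 0.940) \<le> x \<Longrightarrow> x \<le> (- 0.890) \<Longrightarrow> 0 \<le> y \<Longrightarrow> x^2 + y^2 = 1 \<Longrightarrow> 0 < Ef x y (cos x) (sin x) (cosh y) (sinh y)"
  by (rule piece_gen[where xa="(- 0.940)" and xb="(- 0.890)" and al="0.589" and au="0.630" and bl="(- 0.808)" and bu="(- 0.777)" and yl="0.341" and yu="0.456" and chl="1.058" and chu="1.106" and shl="0.347" and shu="0.472"]) (simp_all add: cP_def sP_def eP_def IE_def imul_def iadd_def isub_def power_divide)

lemma piece_2: "(- 0.890) \<le> x \<Longrightarrow> x \<le> (- 0.840) \<Longrightarrow> 0 \<le> y \<Longrightarrow> x^2 + y^2 = 1 \<Longrightarrow> 0 < Ef x y (cos x) (sin x) (cosh y) (sinh y)"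
  by (rule piece_gen[where xa="(- 0.890)" and xb="(- 0.840)" and al="0.629" and au="0.668" and bl="(- 0.778)" and bu="(- 0.744)" and yl="0.455" and yu="0.543" and chl="1.105" and chu="1.152" and shl="0.470" and shu="0.571"]) (simp_all add: cP_def sP_def eP_def IE_def imul_def iadd_def isub_def power_divide)

lemma piece_3: "(- 0.840) \<le> x \<Longrightarrow> x \<le> (- 0.790) \<Longrightarrow> 0 \<le> y \<Longrightarrow> x^2 + y^2 = 1 \<Longrightarrow> 0 < Ef x y (cos x) (sin x) (cosh y) (sinh y)"
  by (rule piece_gen[where xa="(- 0.840)" and xb="(- 0.790)" and al="0.667" and au="0.704" and bl="(- 0.745)" and bu="(- 0.710)" and yl="0.542" and yu="0.614" and chl="1.150" and chu="1.195" and shl="0.568" and shu="0.654"]) (simp_all add: cP_def sP_def eP_def IE_def imul_def iadd_def isub_def power_divide)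

lemma piece_4: "(- 0.790) \<le> x \<Longrightarrow> x \<le> (- 0.730) \<Longrightarrow> 0 \<le> y \<Longrightarrow> x^2 + y^2 = 1 \<Longrightarrow> 0 < Ef x y (cos x) (sin x) (cosh y) (sinh y)"
  by (rule piece_gen[where xa="(- 0.790)" and xb="(- 0.730)" and al="0.703" and au="0.746" and bl="(- 0.711)" and bu="(- 0.666)" and yl="0.613" and yu="0.684" and chl="1.193" and chu="1.244" and shl="0.652" and shu="0.739"]) (simp_all add: cP_def sP_def eP_def IE_def imul_def iadd_def isub_def power_divide)

lemma piece_5: "(- 0.730) \<le> x \<Longrightarrow> x \<le> (- 0.660) \<Longrightarrow> 0 \<le> y \<Longrightarrow> x^2 + y^2 = 1 \<Longrightarrow> 0 < Ef x y (cos x) (sin x) (cosh y) (sinh y)"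
  by (rule piece_gen[where xa="(- 0.730)" and xb="(- 0.660)" and al="0.745" and au="0.790" and bl="(- 0.667)" and bu="(- 0.613)" and yl="0.683" and yu="0.752" and chl="1.242" and chu="1.297" and shl="0.737" and shu="0.825"]) (simp_all add: cP_def sP_def eP_def IE_def imul_def iadd_def isub_def power_divide)

lemma piece_6: "(- 0.660) \<le> x \<Longrightarrow> x \<le> (- 0.570) \<Longrightarrow> 0 \<le> y \<Longrightarrow> x^2 + y^2 = 1 \<Longrightarrow> 0 < Ef x y (cos x) (sin x) (cosh y) (sinh y)"
  by (rule piece_gen[where xa="(- 0.660)" and xb="(- 0.570)" and al="0.789" and au="0.842" and bl="(- 0.614)" and bu="(- 0.539)" and yl="0.751" and yu="0.822" and chl="1.295" and chu="1.358" and shl="0.823" and shu="0.918"]) (simp_all add: cP_def sP_def eP_def IE_def imul_def iadd_def isub_def power_divide)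

lemma piece_7: "(- 0.570) \<le> x \<Longrightarrow> x \<le> (- 0.450) \<Longrightarrow> 0 \<le> y \<Longrightarrow> x^2 + y^2 = 1 \<Longrightarrow> 0 < Ef x y (cos x) (sin x) (cosh y) (sinh y)"
  by (rule piece_gen[where xa="(- 0.570)" and xb="(- 0.450)" and al="0.841" and au="0.901" and bl="(- 0.540)" and bu="(- 0.434)" and yl="0.821" and yu="0.894" and chl="1.356" and chu="1.427" and shl="0.916" and shu="1.018"]) (simp_all add: cP_def sP_def eP_def IE_def imul_def iadd_def isub_def power_divide)

lemma piece_8: "(- 0.450) \<le> x \<Longrightarrow> x \<le> (- 0.280) \<Longrightarrow> 0 \<le> y \<Longrightarrow> x^2 + y^2 = 1 \<Longrightarrow> 0 < Ef x y (cos x) (sin x) (cosh y) (sinh y)"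
  by (rule piece_gen[where xa="(- 0.450)" and xb="(- 0.280)" and al="0.900" and au="0.962" and bl="(- 0.435)" and bu="(- 0.276)" and yl="0.893" and yu="0.960" and chl="1.425" and chu="1.498" and shl="1.016" and shu="1.115"]) (simp_all add: cP_def sP_def eP_def IE_def imul_def iadd_def isub_def power_divide)

lemma piece_9: "(- 0.280) \<le> x \<Longrightarrow> x \<le> 0.030 \<Longrightarrow> 0 \<le> y \<Longrightarrow> x^2 + y^2 = 1 \<Longrightarrow> 0 < Ef x y (cos x) (sin x) (cosh y) (sinh y)"
  by (rule piece_gen[where xa="(- 0.280)" and xb="0.030" and al="0.961" and au="1" and bl="(- 0.277)" and bu="0.030" and yl="0.960" and yu="1" and chl="1.497" and chu="1.544" and shl="1.114" and shu="1.176"]) (simp_all add: cP_def sP_def eP_def IE_def imul_def iadd_def isub_def power_divide)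

lemma piece_10: "0.030 \<le> x \<Longrightarrow> x \<le> 0.220 \<Longrightarrow> 0 \<le> y \<Longrightarrow> x^2 + y^2 = 1 \<Longrightarrow> 0 < Ef x y (cos x) (sin x) (cosh y) (sinh y)"
  by (rule piece_gen[where xa="0.030" and xb="0.220" and al="0.975" and au="1" and bl="0.029" and bu="0.219" and yl="0.975" and yu="1" and chl="1.514" and chu="1.544" and shl="1.136" and shu="1.176"]) (simp_all add: cP_def sP_def eP_def IE_def imul_def iadd_def isub_def power_divide)

lemma piece_11: "0.220 \<le> x \<Longrightarrow> x \<le> 0.310 \<Longrightarrow> 0 \<le> y \<Longrightarrow> x^2 + y^2 = 1 \<Longrightarrow> 0 < Ef x y (cos x) (sin x) (cosh y) (sinh y)"
  by (rule piece_gen[where xa="0.220" and xb="0.310" and al="0.952" and au="0.976" and bl="0.218" and bu="0.306" and yl="0.950" and yu="0.976" and chl="1.486" and chu="1.516" and shl="1.099" and shu="1.139"]) (simp_all add: cP_def sP_def eP_def IE_def imul_def iadd_def isub_def power_divide)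

lemma piece_12: "0.310 \<le> x \<Longrightarrow> x \<le> 0.380 \<Longrightarrow> 0 \<le> y \<Longrightarrow> x^2 + y^2 = 1 \<Longrightarrow> 0 < Ef x y (cos x) (sin x) (cosh y) (sinh y)"
  by (rule piece_gen[where xa="0.310" and xb="0.380" and al="0.928" and au="0.953" and bl="0.305" and bu="0.371" and yl="0.924" and yu="0.951" and chl="1.458" and chu="1.488" and shl="1.061" and shu="1.102"]) (simp_all add: cP_def sP_def eP_def IE_def imul_def iadd_def isub_def power_divide)

lemma piece_13: "0.380 \<le> x \<Longrightarrow> x \<le> 0.430 \<Longrightarrow> 0 \<le> y \<Longrightarrow> x^2 + y^2 = 1 \<Longrightarrow> 0 < Ef x y (cos x) (sin x) (cosh y) (sinh y)"
  by (rule piece_gen[where xa="0.380" and xb="0.430" and al="0.908" and au="0.929" and bl="0.370" and bu="0.417" and yl="0.902" and yu="0.925" and chl="1.435" and chu="1.460" and shl="1.029" and shu="1.063"]) (simp_all add: cP_def sP_def eP_def IE_def imul_def iadd_def isub_def power_divide)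

lemma piece_14: "0.430 \<le> x \<Longrightarrow> x \<le> 0.470 \<Longrightarrow> 0 \<le> y \<Longrightarrow> x^2 + y^2 = 1 \<Longrightarrow> 0 < Ef x y (cos x) (sin x) (cosh y) (sinh y)"
  by (rule piece_gen[where xa="0.430" and xb="0.470" and al="0.891" and au="0.909" and bl="0.416" and bu="0.453" and yl="0.882" and yu="0.903" and chl="1.414" and chu="1.437" and shl="1" and shu="1.031"]) (simp_all add: cP_def sP_def eP_def IE_def imul_def iadd_def isub_def power_divide)

lemma piece_15: "0.470 \<le> x \<Longrightarrow> x \<le> 0.500 \<Longrightarrow> 0 \<le> y \<Longrightarrow> x^2 + y^2 = 1 \<Longrightarrow> 0 < Ef x y (cos x) (sin x) (cosh y) (sinh y)"
  by (rule piece_gen[where xa="0.470" and xb="0.500" and al="0.877" and au="0.892" and bl="0.452" and bu="0.480" and yl="0.866" and yu="0.883" and chl="1.398" and chu="1.416" and shl="0.978" and shu="1.003"]) (simp_all add: cP_def sP_def eP_def IE_def imul_def iadd_def isub_def power_divide)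

lemma piece_16: "0.500 \<le> x \<Longrightarrow> x \<le> 0.530 \<Longrightarrow> 0 \<le> y \<Longrightarrow> x^2 + y^2 = 1 \<Longrightarrow> 0 < Ef x y (cos x) (sin x) (cosh y) (sinh y)"
  by (rule piece_gen[where xa="0.500" and xb="0.530" and al="0.862" and au="0.878" and bl="0.479" and bu="0.506" and yl="0.847" and yu="0.867" and chl="1.380" and chu="1.401" and shl="0.951" and shu="0.980"]) (simp_all add: cP_def sP_def eP_def IE_def imul_def iadd_def isub_def power_divide)

lemma piece_17: "0.530 \<le> x \<Longrightarrow> x \<le> 0.560 \<Longrightarrow> 0 \<le> y \<Longrightarrow> x^2 + y^2 = 1 \<Longrightarrow> 0 < Ef x y (cos x) (sin x) (cosh y) (sinh y)"
  by (rule piece_gen[where xa="0.530" and xb="0.560" and al="0.847" and au="0.863" and bl="0.505" and bu="0.532" and yl="0.828" and yu="0.848" and chl="1.362" and chu="1.382" and shl="0.925" and shu="0.954"]) (simp_all add: cP_def sP_def eP_def IE_def imul_def iadd_def isub_def power_divide)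

lemma piece_18: "0.560 \<le> x \<Longrightarrow> x \<le> 0.590 \<Longrightarrow> 0 \<le> y \<Longrightarrow> x^2 + y^2 = 1 \<Longrightarrow> 0 < Ef x y (cos x) (sin x) (cosh y) (sinh y)"
  by (rule piece_gen[where xa="0.560" and xb="0.590" and al="0.830" and au="0.848" and bl="0.531" and bu="0.557" and yl="0.807" and yu="0.829" and chl="1.343" and chu="1.364" and shl="0.897" and shu="0.928"]) (simp_all add: cP_def sP_def eP_def IE_def imul_def iadd_def isub_def power_divide)

lemma piece_19: "0.590 \<le> x \<Longrightarrow> x \<le> 0.620 \<Longrightarrow> 0 \<le> y \<Longrightarrow> x^2 + y^2 = 1 \<Longrightarrow> 0 < Ef x y (cos x) (sin x) (cosh y) (sinh y)"
  by (rule piece_gen[where xa="0.590" and xb="0.620" and al="0.813" and au="0.831" and bl="0.556" and bu="0.582" and yl="0.784" and yu="0.808" and chl="1.323" and chu="1.345" and shl="0.866" and shu="0.899"]) (simp_all add: cP_def sP_def eP_def IE_def imul_def iadd_def isub_def power_divide)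

lemma piece_20: "0.620 \<le> x \<Longrightarrow> x \<le> 0.650 \<Longrightarrow> 0 \<le> y \<Longrightarrow> x^2 + y^2 = 1 \<Longrightarrow> 0 < Ef x y (cos x) (sin x) (cosh y) (sinh y)"
  by (rule piece_gen[where xa="0.620" and xb="0.650" and al="0.796" and au="0.814" and bl="0.581" and bu="0.606" and yl="0.759" and yu="0.785" and chl="1.302" and chu="1.325" and shl="0.833" and shu="0.869"]) (simp_all add: cP_def sP_def eP_def IE_def imul_def iadd_def isub_def power_divide)

lemma piece_21: "0.650 \<le> x \<Longrightarrow> x \<le> 0.680 \<Longrightarrow> 0 \<le> y \<Longrightarrow> x^2 + y^2 = 1 \<Longrightarrow> 0 < Ef x y (cos x) (sin x) (cosh y) (sinh y)"
  by (rule piece_gen[where xa="0.650" and xb="0.680" and al="0.777" and au="0.797" and bl="0.605" and bu="0.629" and yl="0.733" and yu="0.760" and chl="1.280" and chu="1.303" and shl="0.800" and shu="0.836"]) (simp_all add: cP_def sP_def eP_def IE_def imul_def iadd_def isub_def power_divide)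

lemma piece_22: "0.680 \<le> x \<Longrightarrow> x \<le> 0.710 \<Longrightarrow> 0 \<le> y \<Longrightarrow> x^2 + y^2 = 1 \<Longrightarrow> 0 < Ef x y (cos x) (sin x) (cosh y) (sinh y)"
  by (rule piece_gen[where xa="0.680" and xb="0.710" and al="0.758" and au="0.778" and bl="0.628" and bu="0.652" and yl="0.704" and yu="0.734" and chl="1.258" and chu="1.282" and shl="0.763" and shu="0.802"]) (simp_all add: cP_def sP_def eP_def IE_def imul_def iadd_def isub_def power_divide)

lemma piece_23: "0.710 \<le> x \<Longrightarrow> x \<le> 0.740 \<Longrightarrow> 0 \<le> y \<Longrightarrow> x^2 + y^2 = 1 \<Longrightarrow> 0 < Ef x y (cos x) (sin x) (cosh y) (sinh y)"
  by (rule piece_gen[where xa="0.710" and xb="0.740" and al="0.738" and au="0.759" and bl="0.651" and bu="0.675" and yl="0.672" and yu="0.705" and chl="1.234" and chu="1.259" and shl="0.723" and shu="0.765"]) (simp_all add: cP_def sP_def eP_def IE_def imul_def iadd_def isub_def power_divide)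

lemma piece_24: "0.740 \<le> x \<Longrightarrow> x \<le> 0.780 \<Longrightarrow> 0 \<le> y \<Longrightarrow> x^2 + y^2 = 1 \<Longrightarrow> 0 < Ef x y (cos x) (sin x) (cosh y) (sinh y)"
  by (rule piece_gen[where xa="0.740" and xb="0.780" and al="0.710" and au="0.739" and bl="0.674" and bu="0.704" and yl="0.625" and yu="0.673" and chl="1.201" and chu="1.236" and shl="0.666" and shu="0.725"]) (simp_all add: cP_def sP_def eP_def IE_def imul_def iadd_def isub_def power_divide)

lemma piece_25: "0.780 \<le> x \<Longrightarrow> x \<le> 0.820 \<Longrightarrow> 0 \<le> y \<Longrightarrow> x^2 + y^2 = 1 \<Longrightarrow> 0 < Ef x y (cos x) (sin x) (cosh y) (sinh y)"
  by (rule piece_gen[where xa="0.780" and xb="0.820" and al="0.682" and au="0.711" and bl="0.703" and bu="0.732" and yl="0.572" and yu="0.626" and chl="1.168" and chu="1.203" and shl="0.603" and shu="0.668"]) (simp_all add: cP_def sP_def eP_def IE_def imul_def iadd_def isub_def power_divide)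

lemma piece_26: "0.820 \<le> x \<Longrightarrow> x \<le> 0.880 \<Longrightarrow> 0 \<le> y \<Longrightarrow> x^2 + y^2 = 1 \<Longrightarrow> 0 < Ef x y (cos x) (sin x) (cosh y) (sinh y)"
  by (rule piece_gen[where xa="0.820" and xb="0.880" and al="0.637" and au="0.683" and bl="0.731" and bu="0.771" and yl="0.474" and yu="0.573" and chl="1.114" and chu="1.169" and shl="0.491" and shu="0.605"]) (simp_all add: cP_def sP_def eP_def IE_def imul_def iadd_def isub_def power_divide)

lemma piece_27: "0.880 \<le> x \<Longrightarrow> x \<le> 0.960 \<Longrightarrow> 0 \<le> y \<Longrightarrow> x^2 + y^2 = 1 \<Longrightarrow> 0 < Ef x y (cos x) (sin x) (cosh y) (sinh y)"
  by (rule piece_gen[where xa="0.880" and xb="0.960" and al="0.573" and au="0.638" and bl="0.770" and bu="0.820" and yl="0.279" and yu="0.475" and chl="1.039" and chu="1.115" and shl="0.282" and shu="0.494"]) (simp_all add: cP_def sP_def eP_def IE_def imul_def iadd_def isub_def power_divide)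

lemma piece_28: "0.960 \<le> x \<Longrightarrow> x \<le> 1 \<Longrightarrow> 0 \<le> y \<Longrightarrow> x^2 + y^2 = 1 \<Longrightarrow> 0 < Ef x y (cos x) (sin x) (cosh y) (sinh y)"
  by (rule piece_gen[where xa="0.960" and xb="1" and al="0.540" and au="0.574" and bl="0.819" and bu="0.842" and yl="0" and yu="0.280" and chl="1" and chu="1.040" and shl="0" and shu="0.284"]) (simp_all add: cP_def sP_def eP_def IE_def imul_def iadd_def isub_def power_divide)

lemma upto_0: "-1 \<le> x \<Longrightarrow> x \<le> (- 0.940) \<Longrightarrow> 0 \<le> y \<Longrightarrow> x^2 + y^2 = 1 \<Longrightarrow> 0 < Ef x y (cos x) (sin x) (cosh y) (sinh y)"
  using piece_0 by simp

lemma upto_1: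
  assumes "-1 \<le> x" "x \<le> (- 0.890)" "0 \<le> y" "x^2 + y^2 = 1"
  shows "0 < Ef x y (cos x) (sin x) (cosh y) (sinh y)"
proof (cases "x \<le> (- 0.940)")
  case True
  show ?thesis by (rule upto_0[OF assms(1) True assms(3,4)])
next
  case False
  then have h: "(- 0.940) \<le> x" by simp
  show ?thesis by (rule piece_1[OF h assms(2,3,4)])
qed

lemma upto_2:
  assumes "-1 \<le> x" "x \<le> (- 0.840)" "0 \<le> y" "x^2 + y^2 = 1"
  shows "0 < Ef x y (cos x) (sin x) (cosh y) (sinh y)"
proof (cases "x \<le> (- 0.890)")
  case True
  show ?thesis by (rule upto_1[OF assms(1) True assms(3,4)])
next
  case False
  then have h: "(- 0.890) \<le> x" by simp
  show ?thesis by (rule piece_2[OF h assms(2,3,4)])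
qed

lemma upto_3:
  assumes "-1 \<le> x" "x \<le> (- 0.790)" "0 \<le> y" "x^2 + y^2 = 1"
  shows "0 < Ef x y (cos x) (sin x) (cosh y) (sinh y)"
proof (cases "x \<le> (- 0.840)")
  case True
  show ?thesis by (rule upto_2[OF assms(1) True assms(3,4)])
next
  case False
  then have h: "(- 0.840) \<le> x" by simp
  show ?thesis by (rule piece_3[OF h assms(2,3,4)])
qed

lemma upto_4:
  assumes "-1 \<le> x" "x \<le> (- 0.730)" "0 \<le> y" "x^2 + y^2 = 1"
  shows "0 < Ef x y (cos x) (sin x) (cosh y) (sinh y)"
proof (cases "x \<le> (- 0.790)")
  case True
  show ?thesis by (rule upto_3[OF assms(1) True assms(3,4)])
next
  case False
  then have h: "(- 0.790) \<le> x" by simp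
  show ?thesis by (rule piece_4[OF h assms(2,3,4)])
qed

lemma upto_5:
  assumes "-1 \<le> x" "x \<le> (- 0.660)" "0 \<le> y" "x^2 + y^2 = 1"
  shows "0 < Ef x y (cos x) (sin x) (cosh y) (sinh y)"
proof (cases "x \<le> (- 0.730)")
  case True
  show ?thesis by (rule upto_4[OF assms(1) True assms(3,4)])
next
  case False
  then have h: "(- 0.730) \<le> x" by simp
  show ?thesis by (rule piece_5[OF h assms(2,3,4)])
qed

lemma upto_6:
  assumes "-1 \<le> x" "x \<le> (- 0.570)" "0 \<le> y" "x^2 + y^2 = 1"
  shows "0 < Ef x y (cos x) (sin x) (cosh y) (sinh y)"
proof (cases "x \<le> (- 0.660)")
  case True
  show ?thesis by (rule upto_5[OF assms(1) True assms(3,4)])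
next
  case False
  then have h: "(- 0.660) \<le> x" by simp
  show ?thesis by (rule piece_6[OF h assms(2,3,4)])
qed

lemma upto_7:
  assumes "-1 \<le> x" "x \<le> (- 0.450)" "0 \<le> y" "x^2 + y^2 = 1"
  shows "0 < Ef x y (cos x) (sin x) (cosh y) (sinh y)"
proof (cases "x \<le> (- 0.570)")
  case True
  show ?thesis by (rule upto_6[OF assms(1) True assms(3,4)])
next
  case False
  then have h: "(- 0.570) \<le> x" by simp
  show ?thesis by (rule piece_7[OF h assms(2,3,4)])
qed

lemma upto_8:
  assumes "-1 \<le> x" "x \<le> (- 0.280)" "0 \<le> y" "x^2 + y^2 = 1"
  shows "0 < Ef x y (cos x) (sin x) (cosh y) (sinh y)"
proof (cases "x \<le> (- 0.450)")
  case True
  show ?thesis by (rule upto_7[OF assms(1) True assms(3,4)])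
next
  case False
  then have h: "(- 0.450) \<le> x" by simp
  show ?thesis by (rule piece_8[OF h assms(2,3,4)])
qed

lemma upto_9:
  assumes "-1 \<le> x" "x \<le> 0.030" "0 \<le> y" "x^2 + y^2 = 1"
  shows "0 < Ef x y (cos x) (sin x) (cosh y) (sinh y)"
proof (cases "x \<le> (- 0.280)")
  case True
  show ?thesis by (rule upto_8[OF assms(1) True assms(3,4)])
next
  case False
  then have h: "(- 0.280) \<le> x" by simp
  show ?thesis by (rule piece_9[OF h assms(2,3,4)])
qed

lemma upto_10:
  assumes "-1 \<le> x" "x \<le> 0.220" "0 \<le> y" "x^2 + y^2 = 1"
  shows "0 < Ef x y (cos x) (sin x) (cosh y) (sinh y)"
proof (cases "x \<le> 0.030")
  case True
  show ?thesis by (rule upto_9[OF assms(1) True assms(3,4)])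
next
  case False
  then have h: "0.030 \<le> x" by simp
  show ?thesis by (rule piece_10[OF h assms(2,3,4)])
qed

lemma upto_11:
  assumes "-1 \<le> x" "x \<le> 0.310" "0 \<le> y" "x^2 + y^2 = 1"
  shows "0 < Ef x y (cos x) (sin x) (cosh y) (sinh y)"
proof (cases "x \<le> 0.220")
  case True
  show ?thesis by (rule upto_10[OF assms(1) True assms(3,4)])
next
  case False
  then have h: "0.220 \<le> x" by simp
  show ?thesis by (rule piece_11[OF h assms(2,3,4)])
qed

lemma upto_12:
  assumes "-1 \<le> x" "x \<le> 0.380" "0 \<le> y" "x^2 + y^2 = 1"
  shows "0 < Ef x y (cos x) (sin x) (cosh y) (sinh y)"
proof (cases "x \<le> 0.310")
  case True
  show ?thesis by (rule upto_11[OF assms(1) True assms(3,4)])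
next
  case False
  then have h: "0.310 \<le> x" by simp
  show ?thesis by (rule piece_12[OF h assms(2,3,4)])
qed

lemma upto_13:
  assumes "-1 \<le> x" "x \<le> 0.430" "0 \<le> y" "x^2 + y^2 = 1"
  shows "0 < Ef x y (cos x) (sin x) (cosh y) (sinh y)"
proof (cases "x \<le> 0.380")
  case True
  show ?thesis by (rule upto_12[OF assms(1) True assms(3,4)])
next
  case False
  then have h: "0.380 \<le> x" by simp
  show ?thesis by (rule piece_13[OF h assms(2,3,4)])
qed

lemma upto_14:
  assumes "-1 \<le> x" "x \<le> 0.470" "0 \<le> y" "x^2 + y^2 = 1"
  shows "0 < Ef x y (cos x) (sin x) (cosh y) (sinh y)"
proof (cases "x \<le> 0.430")
  case True
  show ?thesis by (rule upto_13[OF assms(1) True assms(3,4)])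
next
  case False
  then have h: "0.430 \<le> x" by simp
  show ?thesis by (rule piece_14[OF h assms(2,3,4)])
qed

lemma upto_15:
  assumes "-1 \<le> x" "x \<le> 0.500" "0 \<le> y" "x^2 + y^2 = 1"
  shows "0 < Ef x y (cos x) (sin x) (cosh y) (sinh y)"
proof (cases "x \<le> 0.470")
  case True
  show ?thesis by (rule upto_14[OF assms(1) True assms(3,4)])
next
  case False
  then have h: "0.470 \<le> x" by simp
  show ?thesis by (rule piece_15[OF h assms(2,3,4)])
qed

lemma upto_16:
  assumes "-1 \<le> x" "x \<le> 0.530" "0 \<le> y" "x^2 + y^2 = 1"
  shows "0 < Ef x y (cos x) (sin x) (cosh y) (sinh y)"
proof (cases "x \<le> 0.500")
  case True
  show ?thesis by (rule upto_15[OF assms(1) True assms(3,4)])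
next
  case False
  then have h: "0.500 \<le> x" by simp
  show ?thesis by (rule piece_16[OF h assms(2,3,4)])
qed

lemma upto_17:
  assumes "-1 \<le> x" "x \<le> 0.560" "0 \<le> y" "x^2 + y^2 = 1"
  shows "0 < Ef x y (cos x) (sin x) (cosh y) (sinh y)"
proof (cases "x \<le> 0.530")
  case True
  show ?thesis by (rule upto_16[OF assms(1) True assms(3,4)])
next
  case False
  then have h: "0.530 \<le> x" by simp
  show ?thesis by (rule piece_17[OF h assms(2,3,4)])
qed

lemma upto_18:
  assumes "-1 \<le> x" "x \<le> 0.590" "0 \<le> y" "x^2 + y^2 = 1"
  shows "0 < Ef x y (cos x) (sin x) (cosh y) (sinh y)"
proof (cases "x \<le> 0.560")
  case True
  show ?thesis by (rule upto_17[OF assms(1) True assms(3,4)])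
next
  case False
  then have h: "0.560 \<le> x" by simp
  show ?thesis by (rule piece_18[OF h assms(2,3,4)])
qed

lemma upto_19:
  assumes "-1 \<le> x" "x \<le> 0.620" "0 \<le> y" "x^2 + y^2 = 1"
  shows "0 < Ef x y (cos x) (sin x) (cosh y) (sinh y)"
proof (cases "x \<le> 0.590")
  case True
  show ?thesis by (rule upto_18[OF assms(1) True assms(3,4)])
next
  case False
  then have h: "0.590 \<le> x" by simp
  show ?thesis by (rule piece_19[OF h assms(2,3,4)])
qed

lemma upto_20:
  assumes "-1 \<le> x" "x \<le> 0.650" "0 \<le> y" "x^2 + y^2 = 1"
  shows "0 < Ef x y (cos x) (sin x) (cosh y) (sinh y)"
proof (cases "x \<le> 0.620")
  case True
  show ?thesis by (rule upto_19[OF assms(1) True assms(3,4)])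
next
  case False
  then have h: "0.620 \<le> x" by simp
  show ?thesis by (rule piece_20[OF h assms(2,3,4)])
qed

lemma upto_21:
  assumes "-1 \<le> x" "x \<le> 0.680" "0 \<le> y" "x^2 + y^2 = 1"
  shows "0 < Ef x y (cos x) (sin x) (cosh y) (sinh y)"
proof (cases "x \<le> 0.650")
  case True
  show ?thesis by (rule upto_20[OF assms(1) True assms(3,4)])
next
  case False
  then have h: "0.650 \<le> x" by simp
  show ?thesis by (rule piece_21[OF h assms(2,3,4)])
qed

lemma upto_22:
  assumes "-1 \<le> x" "x \<le> 0.710" "0 \<le> y" "x^2 + y^2 = 1"
  shows "0 < Ef x y (cos x) (sin x) (cosh y) (sinh y)"
proof (cases "x \<le> 0.680")
  case True
  show ?thesis by (rule upto_21[OF assms(1) True assms(3,4)])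
next
  case False
  then have h: "0.680 \<le> x" by simp
  show ?thesis by (rule piece_22[OF h assms(2,3,4)])
qed

lemma upto_23:
  assumes "-1 \<le> x" "x \<le> 0.740" "0 \<le> y" "x^2 + y^2 = 1"
  shows "0 < Ef x y (cos x) (sin x) (cosh y) (sinh y)"
proof (cases "x \<le> 0.710")
  case True
  show ?thesis by (rule upto_22[OF assms(1) True assms(3,4)])
next
  case False
  then have h: "0.710 \<le> x" by simp
  show ?thesis by (rule piece_23[OF h assms(2,3,4)])
qed

lemma upto_24:
  assumes "-1 \<le> x" "x \<le> 0.780" "0 \<le> y" "x^2 + y^2 = 1"
  shows "0 < Ef x y (cos x) (sin x) (cosh y) (sinh y)"
proof (cases "x \<le> 0.740")
  case True
  show ?thesis by (rule upto_23[OF assms(1) True assms(3,4)])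
next
  case False
  then have h: "0.740 \<le> x" by simp
  show ?thesis by (rule piece_24[OF h assms(2,3,4)])
qed

lemma upto_25:
  assumes "-1 \<le> x" "x \<le> 0.820" "0 \<le> y" "x^2 + y^2 = 1"
  shows "0 < Ef x y (cos x) (sin x) (cosh y) (sinh y)"
proof (cases "x \<le> 0.780")
  case True
  show ?thesis by (rule upto_24[OF assms(1) True assms(3,4)])
next
  case False
  then have h: "0.780 \<le> x" by simp
  show ?thesis by (rule piece_25[OF h assms(2,3,4)])
qed

lemma upto_26:
  assumes "-1 \<le> x" "x \<le> 0.880" "0 \<le> y" "x^2 + y^2 = 1"
  shows "0 < Ef x y (cos x) (sin x) (cosh y) (sinh y)"
proof (cases "x \<le> 0.820")
  case True
  show ?thesis by (rule upto_25[OF assms(1) True assms(3,4)])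
next
  case False
  then have h: "0.820 \<le> x" by simp
  show ?thesis by (rule piece_26[OF h assms(2,3,4)])
qed

lemma upto_27:
  assumes "-1 \<le> x" "x \<le> 0.960" "0 \<le> y" "x^2 + y^2 = 1"
  shows "0 < Ef x y (cos x) (sin x) (cosh y) (sinh y)"
proof (cases "x \<le> 0.880")
  case True
  show ?thesis by (rule upto_26[OF assms(1) True assms(3,4)])
next
  case False
  then have h: "0.880 \<le> x" by simp
  show ?thesis by (rule piece_27[OF h assms(2,3,4)])
qed

lemma upto_28:
  assumes "-1 \<le> x" "x \<le> 1" "0 \<le> y" "x^2 + y^2 = 1"
  shows "0 < Ef x y (cos x) (sin x) (cosh y) (sinh y)"
proof (cases "x \<le> 0.960")
  case True
  show ?thesis by (rule upto_27[OF assms(1) True assms(3,4)])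
next
  case False
  then have h: "0.960 \<le> x" by simp
  show ?thesis by (rule piece_28[OF h assms(2,3,4)])
qed


definition dphi :: "complex \<Rightarrow> complex" where
  "dphi z = (cos z + (1+z) * sin z) / (cos z)^2"

lemma cos_nz:
  fixes z :: complex assumes "norm z < 3/2" shows "cos z \<noteq> 0"
proof
  assume "cos z = 0"
  then obtain n :: int where z: "z = complex_of_real (n*pi) + of_real pi/2" by (auto simp: cos_eq_0)
  then have "z = complex_of_real ((n + 1/2)*pi)" by (simp add: algebra_simps)
  then have "norm z = \<bar>(n + 1/2)*pi\<bar>" by (simp only: norm_of_real)
  then have nz: "norm z = \<bar>n + 1/2\<bar> * pi" by (simp add: abs_mult)
  have "\<bar>real_of_int n + 1/2\<bar> \<ge> 1/2" by (cases "n \<ge> 0") auto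
  then have "norm z \<ge> pi/2" unfolding nz using mult_right_mono[of "1/2" "\<bar>real_of_int n + 1/2\<bar>" pi] by simp
  with pi_gt3 assms show False by linarith
qed

lemma phi_deriv:
  assumes "norm z < 3/2" shows "(phi_nc has_field_derivative dphi z) (at z)"
proof -
  have c: "cos z \<noteq> 0" using cos_nz[OF assms] .
  have "((\<lambda>z. (1+z) / cos z) has_field_derivative ((1 * cos z - (1+z) * (- sin z)) / (cos z * cos z))) (at z)"
    by (intro DERIV_divide c derivative_eq_intros) auto
  moreover have "(1 * cos z - (1+z) * (- sin z)) / (cos z * cos z) = dphi z"
    by (simp add: dphi_def power2_eq_square algebra_simps)
  ultimately show ?thesis unfolding phi_nc_def[abs_def] by simp
qed

lemma phi_holo: "phi_nc holomorphic_on ball 0 (3/2)"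
  unfolding phi_nc_def[abs_def] using cos_nz by (intro holomorphic_intros) auto

lemma dphi_holo: "dphi holomorphic_on ball 0 (3/2)"
  unfolding dphi_def[abs_def] using cos_nz by (intro holomorphic_intros) auto

lemma dphi_cont: "continuous_on (cball 0 1) dphi"
  by (rule holomorphic_on_imp_continuous_on, rule holomorphic_on_subset[OF dphi_holo]) auto

lemma E_ident:
  fixes a b hc hs x y :: real
  assumes "a^2 + b^2 = 1" "hc^2 - hs^2 = 1"
  shows "Re ((Complex (a*hc) (-(b*hs)) + (1 + Complex x y) * Complex (b*hc) (a*hs)) * cnj (Complex (a*hc) (-(b*hs)))^2) = Ef x y a b hc hs"
proof -
  have "Re ((Complex (a*hc) (-(b*hs)) + (1 + Complex x y) * Complex (b*hc) (a*hs)) * cnj (Complex (a*hc) (-(b*hs)))^2)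
     = Ef x y a b hc hs + (a^2 + b^2 - 1) * (a*hc*hs^2 - b*hc*hs^2 - b*hc*hs^2*x + a*hs^3*y - 2*a*hc^2*hs*y + a*hs*y)
       + (hc^2 - hs^2 - 1) * (a^3*hc + a^2*b*hc + a^2*b*hc*x + a^3*hs*y - a*hs*y)"
    by (simp add: Ef_def power2_eq_square power3_eq_cube algebra_simps)
  then show ?thesis using assms by simp
qed

lemma dphi_alt:
  assumes cz: "cos z \<noteq> 0"
  shows "dphi z = (cos z + (1+z) * sin z) * cnj (cos z) ^ 2 / of_real ((cmod (cos z))^4)"
proof -
  have "of_real ((cmod (cos z))^4) = (cos z * cnj (cos z))^2"
    by (metis complex_norm_square power_mult power_mult_distrib numeral_Bit0 numeral_One mult_2 power2_eq_square of_real_power)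
  moreover have "cnj (cos z) \<noteq> 0" using cz by simp
  ultimately show ?thesis using cz unfolding dphi_def by (simp add: power_mult_distrib)
qed

lemma cos_parts: "cos z = Complex (cos (Re z) * cosh (Im z)) (-(sin (Re z) * sinh (Im z)))"
  by (simp add: complex_eq_iff Re_cos Im_cos cosh_exp sinh_exp field_simps)
lemma sin_parts: "sin z = Complex (sin (Re z) * cosh (Im z)) (cos (Re z) * sinh (Im z))"
  by (simp add: complex_eq_iff Re_sin Im_sin cosh_exp sinh_exp field_simps)

lemma Ef_sym: "Ef x (-y) a b hc (-hs) = Ef x y a b hc hs"
  by (simp add: Ef_def algebra_simps)

lemma Re_dphi_circle:
  assumes "norm z = 1" shows "0 < Re (dphi z)"
proof -
  define x where "x = Re z"
  define y where "y = Im z"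
  have xy: "x^2 + y^2 = 1" using assms unfolding x_def y_def cmod_def
    by (metis real_sqrt_eq_1_iff)
  then have x1: "-1 \<le> x" "x \<le> 1" using abs_le_square_iff[of x 1] by (auto simp: abs_le_iff) (smt (verit) power2_less_eq_zero_iff zero_le_power2)+
  have E: "0 < Ef x y (cos x) (sin x) (cosh y) (sinh y)"
  proof (cases "0 \<le> y")
    case True show ?thesis using upto_28[OF x1 True xy] .
  next
    case False
    then have "0 < Ef x (-y) (cos x) (sin x) (cosh (-y)) (sinh (-y))"
      using upto_28[OF x1, of "-y"] xy by simp
    then show ?thesis using Ef_sym by simp
  qed
  define a where "a = cos x"
  define b where "b = sin x"
  define hc where "hc = cosh y"
  define hs where "hs = sinh y"
  have C: "cos z = Complex (a*hc) (-(b*hs))"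
    unfolding a_def b_def hc_def hs_def x_def y_def by (rule cos_parts)
  have S: "sin z = Complex (b*hc) (a*hs)"
    unfolding a_def b_def hc_def hs_def x_def y_def by (rule sin_parts)
  have Z: "z = Complex x y" by (simp add: x_def y_def)
  have id1: "a^2 + b^2 = 1" by (simp add: a_def b_def)
  have id2: "hc^2 - hs^2 = 1" unfolding hc_def hs_def by (simp add: cosh_square_eq)
  have cz: "cos z \<noteq> 0" using cos_nz assms by simp
  define N where "N = cos z + (1+z) * sin z"
  have "Re (N * cnj (cos z) ^ 2) = Ef x y a b hc hs"
    unfolding N_def C S by (subst Z) (rule E_ident[OF id1 id2])
  then have ReN: "0 < Re (N * cnj (cos z) ^ 2)" using E by (simp add: a_def b_def hc_def hs_def)
  have "dphi z = N * cnj (cos z) ^ 2 / of_real ((cmod (cos z))^4)"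
    unfolding N_def by (rule dphi_alt[OF cz])
  then have "Re (dphi z) = Re (N * cnj (cos z) ^ 2) / (cmod (cos z))^4"
    by (simp add: Re_divide_of_real)
  then show ?thesis using ReN cz by simp
qed


lemma Re_dphi_ge:
  obtains m where "m > 0" "\<And>z. z \<in> cball 0 1 \<Longrightarrow> m \<le> Re (dphi z)"
proof -
  have "continuous_on (sphere 0 1) (\<lambda>z. Re (dphi z))"
    by (intro continuous_intros continuous_on_subset[OF dphi_cont]) auto
  then obtain z0 where z0: "z0 \<in> sphere (0::complex) 1" "\<And>y. y \<in> sphere 0 1 \<Longrightarrow> Re (dphi z0) \<le> Re (dphi y)"
    using continuous_attains_inf[of "sphere (0::complex) 1" "\<lambda>z. Re (dphi z)"] by force
  define m where "m = Re (dphi z0)"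
  have m0: "m > 0" unfolding m_def using Re_dphi_circle z0(1) by simp
  have "m \<le> Re (dphi \<xi>)" if "\<xi> \<in> cball 0 1" for \<xi>
  proof -
    have "norm (exp (- dphi \<xi>)) \<le> exp (- m)"
    proof (rule maximum_modulus_frontier[where f = "\<lambda>z. exp (- dphi z)" and S = "cball 0 1"])
      show "(\<lambda>z. exp (- dphi z)) holomorphic_on interior (cball 0 1)"
        by (rule holomorphic_on_subset[of _ "ball 0 (3/2)"]) (auto intro!: holomorphic_intros dphi_holo)
      show "continuous_on (closure (cball 0 1)) (\<lambda>z. exp (- dphi z))"
        by (auto intro!: continuous_intros dphi_cont)
      show "norm (exp (- dphi z)) \<le> exp (- m)" if "z \<in> frontier (cball 0 1)" for z
        using z0(2)[of z] that by (simp add: m_def)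
    qed (use that in auto)
    then show ?thesis by simp
  qed
  then show ?thesis using that m0 by blast
qed

lemma phi_inj: "inj_on phi_nc (cball 0 1)"
proof (rule inj_onI, rule ccontr)
  fix w1 w2 assume w: "w1 \<in> cball 0 1" "w2 \<in> cball 0 1" "phi_nc w1 = phi_nc w2" "w1 \<noteq> w2"
  obtain m where m: "m > 0" "\<And>z. z \<in> cball 0 1 \<Longrightarrow> m \<le> Re (dphi z)" using Re_dphi_ge by blast
  define d where "d = w2 - w1"
  have d0: "d \<noteq> 0" using w by (simp add: d_def)
  have seg: "closed_segment w1 w2 \<subseteq> cball 0 1" using w by (intro closed_segment_subset) auto
  have "\<exists>u. u \<in> closed_segment w1 w2 \<and> Re (phi_nc w2 / d) - Re (phi_nc w1 / d) = Re (dphi u / d * (w2 - w1))"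
  proof (rule complex_mvt_line)
    fix u assume "u \<in> closed_segment w1 w2"
    then have "norm u < 3/2" using seg by force
    then show "((\<lambda>u. phi_nc u / d) has_field_derivative dphi u / d) (at u)"
      using phi_deriv d0 by (auto intro!: derivative_eq_intros)
  qed
  then obtain u where u: "u \<in> closed_segment w1 w2" "Re (phi_nc w2 / d) - Re (phi_nc w1 / d) = Re (dphi u / d * (w2 - w1))"
    by blast
  have "Re (dphi u / d * (w2 - w1)) = Re (dphi u)" using d0 by (simp add: d_def)
  moreover have "m \<le> Re (dphi u)" using m(2) u(1) seg by blast
  ultimately show False using u(2) w(3) m(1) by simp
qed

lemma phi0: "phi_nc 0 = 1" by (simp add: phi_nc_def)

lemma phi_boundary_ne1: "phi_nc (exp (\<i> * of_real t)) \<noteq> 1"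
proof
  assume "phi_nc (exp (\<i> * of_real t)) = 1"
  then have h: "phi_nc (exp (\<i> * of_real t)) = phi_nc 0" by (simp add: phi0)
  have "exp (\<i> * of_real t) = 0" by (rule inj_onD[OF phi_inj h]) (auto simp: norm_exp_i_times)
  then show False by simp
qed


lemma sums_nz: fixes z :: complex assumes "norm z < 1"
  shows "(\<lambda>n. of_nat n * z^n) sums (z / (1 - z)^2)"
proof -
  have "(\<lambda>n. z * (of_nat (Suc n) * z ^ n)) sums (z * (1 / (1 - z)^2))"
    by (rule sums_mult[OF geometric_deriv_sums[OF assms]])
  then have "(\<lambda>n. of_nat (Suc n) * z ^ (Suc n)) sums (z / (1 - z)^2)"
    by (simp add: algebra_simps)
  then show ?thesis by (subst (asm) sums_Suc_iff) simp
qed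

lemma sums_pos: fixes z :: complex assumes "norm z < 1"
  shows "(\<lambda>n. if n = 0 then 0 else z^n) sums (z / (1 - z))"
proof -
  have "(\<lambda>n. z * z ^ n) sums (z * (1 / (1 - z)))"
    by (rule sums_mult[OF geometric_sums[OF assms]])
  then have "(\<lambda>n. (\<lambda>n. if n = 0 then 0 else z^n) (Suc n)) sums (z / (1 - z))"
    by simp
  then show ?thesis by (subst (asm) sums_Suc_iff) simp
qed

definition gfps :: "complex \<Rightarrow> complex fps" where
  "gfps c = Abs_fps (\<lambda>n. if n = 0 then 0 else of_nat n - c)"

lemma gfps_sums:
  assumes "norm z < 1"
  shows "(\<lambda>n. fps_nth (gfps c) n * z^n) sums ((z - c * (z - z^2)) / (1 - z)^2)"
proof -
  have "(\<lambda>n. of_nat n * z^n - c * (if n = 0 then 0 else z^n)) sums (z / (1 - z)^2 - c * (z / (1 - z)))"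
    by (intro sums_diff sums_mult sums_nz sums_pos assms)
  moreover have "(\<lambda>n. of_nat n * z^n - c * (if n = 0 then 0 else z^n)) = (\<lambda>n. fps_nth (gfps c) n * z^n)"
    by (auto simp: gfps_def fun_eq_iff algebra_simps)
  moreover have "z / (1 - z)^2 - c * (z / (1 - z)) = (z - c * (z - z^2)) / (1 - z)^2"
  proof -
    have "z \<noteq> 1" using assms by auto
    then have h: "1 - z \<noteq> 0" by simp
    have "c * (z / (1 - z)) = c * z * (1 - z) / (1 - z)^2" using h by (simp add: power2_eq_square)
    then have "z / (1 - z)^2 - c * (z / (1 - z)) = (z - c * z * (1 - z)) / (1 - z)^2"
      by (simp add: diff_divide_distrib)
    then show ?thesis by (simp add: algebra_simps power2_eq_square)
  qed
  ultimately show ?thesis by simp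
qed

lemma gfps_expansion:
  "(\<lambda>w. (w - c * (w - w^2)) / (1 - w)^2) has_fps_expansion gfps c"
  unfolding has_fps_expansion_def
proof
  have "summable (\<lambda>n. fps_nth (gfps c) n * (1/2)^n)"
    using gfps_sums[of "1/2" c] by (auto simp: sums_iff)
  then have "conv_radius (fps_nth (gfps c)) \<ge> norm (1/2::complex)"
    by (rule conv_radius_geI)
  then show "0 < fps_conv_radius (gfps c)"
    unfolding fps_conv_radius_def by (rule less_le_trans[rotated]) simp
  have "eventually (\<lambda>z. z \<in> ball (0::complex) 1) (nhds 0)"
    by (rule eventually_nhds_in_open) auto
  then show "\<forall>\<^sub>F z in nhds 0. eval_fps (gfps c) z = (z - c * (z - z^2)) / (1 - z)^2"
    by eventually_elim (use gfps_sums in \<open>auto simp: eval_fps_def sums_iff\<close>)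
qed

lemma tcoeff_g:
  "tcoeff (\<lambda>w. (w - c * (w - w^2)) / (1 - w)^2) n = (if n = 0 then 0 else of_nat n - c)"
  using fps_nth_fps_expansion[OF gfps_expansion[of c], of n]
  by (simp add: tcoeff_def gfps_def)

lemma f_series:
  assumes "f holomorphic_on ball 0 1" "w \<in> ball 0 1"
  shows "(\<lambda>n. tcoeff f n * w^n) sums f w"
  using holomorphic_power_series[OF assms] by (simp add: tcoeff_def)

lemma df_series:
  assumes "f holomorphic_on ball 0 1" "w \<in> ball 0 1"
  shows "(\<lambda>n. of_nat n * tcoeff f n * w^n) sums (w * deriv f w)"
proof -
  have hd: "deriv f holomorphic_on ball 0 1" using assms(1) by (rule holomorphic_deriv) simp
  have "(\<lambda>n. tcoeff (deriv f) n * w^n) sums deriv f w" by (rule f_series[OF hd assms(2)])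
  moreover have "tcoeff (deriv f) n = of_nat (Suc n) * tcoeff f (Suc n)" for n
  proof -
    have "(deriv ^^ n) (deriv f) = (deriv ^^ Suc n) f" by (simp add: funpow_Suc_right del: funpow.simps)
    have "of_nat (Suc n) * ((deriv ^^ Suc n) f 0 / fact (Suc n)) = (of_nat (Suc n) * (deriv ^^ Suc n) f 0) / (of_nat (Suc n) * fact n)"
      by (simp add: fact_Suc del: of_nat_Suc)
    also have "\<dots> = (deriv ^^ Suc n) f 0 / fact n"
      by (rule mult_divide_mult_cancel_left) (simp del: of_nat_Suc)
    finally show ?thesis unfolding tcoeff_def using \<open>(deriv ^^ n) (deriv f) = _\<close> by simp
  qed
  ultimately have "(\<lambda>n. w * (of_nat (Suc n) * tcoeff f (Suc n) * w^n)) sums (w * deriv f w)"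
    by (intro sums_mult) simp
  then have "(\<lambda>n. of_nat (Suc n) * tcoeff f (Suc n) * w^(Suc n)) sums (w * deriv f w)"
    by (simp add: algebra_simps)
  then show ?thesis by (subst (asm) sums_Suc_iff) simp
qed

lemma hadamard_eq:
  assumes "f holomorphic_on ball 0 1" "f 0 = 0" "w \<in> ball 0 1"
  shows "hadamard f (\<lambda>w. (w - c * (w - w^2)) / (1 - w)^2) w = w * deriv f w - c * f w"
proof -
  have t0: "tcoeff f 0 = 0" using assms(2) by (simp add: tcoeff_def)
  have "(\<lambda>n. of_nat n * tcoeff f n * w^n - c * (tcoeff f n * w^n)) sums (w * deriv f w - c * f w)"
    by (intro sums_diff sums_mult df_series f_series assms)
  moreover have "(\<lambda>n. of_nat n * tcoeff f n * w^n - c * (tcoeff f n * w^n))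
      = (\<lambda>n. tcoeff f n * tcoeff (\<lambda>w. (w - c * (w - w^2)) / (1 - w)^2) n * w^n)"
    unfolding tcoeff_g by (auto simp: fun_eq_iff t0 algebra_simps)
  ultimately show ?thesis unfolding hadamard_def by (simp add: sums_iff)
qed


definition pz :: "(complex \<Rightarrow> complex) \<Rightarrow> complex \<Rightarrow> complex" where
  "pz f z = (if z = 0 then 1 else f z / z)"

lemma pz_holo:
  assumes "f \<in> classA" shows "pz f holomorphic_on ball 0 1"
proof -
  have f: "f holomorphic_on ball 0 1" "f 0 = 0" "deriv f 0 = 1" using assms by (auto simp: classA_def)
  have "(\<lambda>z. if z = 0 then deriv f 0 else (f z - f 0) / (z - 0)) holomorphic_on ball 0 1"
    by (rule pole_lemma_open[OF f(1)]) auto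
  moreover have "(\<lambda>z. if z = 0 then deriv f 0 else (f z - f 0) / (z - 0)) = pz f"
    using f by (auto simp: pz_def fun_eq_iff)
  ultimately show ?thesis by simp
qed

lemma f_pz: "f 0 = 0 \<Longrightarrow> f z = z * pz f z"
  by (auto simp: pz_def)

lemma K_eq:
  assumes "f \<in> classA" "z \<in> ball 0 1"
  shows "div_z (hadamard f (\<lambda>w. (w - c * (w - w^2)) / (1 - w)^2)) z = deriv f z - c * pz f z"
proof -
  have f: "f holomorphic_on ball 0 1" "f 0 = 0" "deriv f 0 = 1" using assms by (auto simp: classA_def)
  have H: "hadamard f (\<lambda>w. (w - c * (w - w^2)) / (1 - w)^2) w = w * deriv f w - c * f w"
    if "w \<in> ball 0 1" for w
    using hadamard_eq[OF f(1) f(2) that] .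
  show ?thesis
  proof (cases "z = 0")
    case False
    then show ?thesis unfolding div_z_def using H[OF assms(2)]
      by (simp add: pz_def diff_divide_distrib)
  next
    case True
    have df: "deriv f holomorphic_on ball 0 1" using f(1) by (rule holomorphic_deriv) simp
    have d1: "(deriv f has_field_derivative deriv (deriv f) 0) (at 0)"
      using df by (intro holomorphic_derivI[of _ "ball 0 1"]) auto
    have d2: "(f has_field_derivative deriv f 0) (at 0)"
      using f(1) by (intro holomorphic_derivI[of _ "ball 0 1"]) auto
    have "((\<lambda>w. w * deriv f w - c * f w) has_field_derivative (1 - c)) (at 0)"
      using DERIV_diff[OF DERIV_mult[OF DERIV_ident d1] DERIV_cmult[OF d2, of c]] by (simp add: f(3))
    then have "((\<lambda>w. hadamard f (\<lambda>w. (w - c * (w - w^2)) / (1 - w)^2) w) has_field_derivative (1 - c)) (at 0)"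
      by (rule has_field_derivative_transform_within_open[where S = "ball 0 1"]) (use H f(3) in auto)
    then have "deriv (hadamard f (\<lambda>w. (w - c * (w - w^2)) / (1 - w)^2)) 0 = 1 - c"
      by (rule DERIV_imp_deriv)
    then show ?thesis using True f(3) by (simp add: div_z_def pz_def)
  qed
qed

lemma boundary_theta:
  assumes "norm w = 1"
  obtains t :: real where "-pi \<le> t" "t \<le> pi" "w = exp (\<i> * of_real t)"
proof -
  have "w \<noteq> 0" using assms by auto
  then have "cis (Arg w) = w" using assms by (simp add: cis_Arg sgn_div_norm)
  then show ?thesis using that[of "Arg w"] Arg_bounded[of w] by (simp add: cis_conv_exp)
qed

lemma phi_ne0: "norm u < 1 \<Longrightarrow> phi_nc u \<noteq> 0"
proof
  assume u: "norm u < 1" "phi_nc u = 0"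
  have "cos u \<noteq> 0" using cos_nz u by simp
  then have "1 + u = 0" using u by (simp add: phi_nc_def)
  then have "u = -1" by (simp add: add_eq_0_iff)
  then show False using u by simp
qed

lemma logderiv_pz:
  assumes "f \<in> classA" "z \<in> ball 0 1" "pz f z \<noteq> 0"
  shows "logderiv_quot f z = deriv f z / pz f z"
proof (cases "z = 0")
  case True then show ?thesis using assms by (simp add: logderiv_quot_def pz_def classA_def)
next
  case False
  have "f 0 = 0" using assms by (simp add: classA_def)
  then have "f z = z * pz f z" by (rule f_pz)
  then show ?thesis using False assms(3) by (simp add: logderiv_quot_def)
qed


theorem mainTheorem14:
  fixes f :: "complex \<Rightarrow> complex"
  assumes "f \<in> classA"
  shows "f \<in> S_star_nc \<longleftrightarrow>
    (\<forall>z\<in>ball 0 1. \<forall>\<theta>::real. -pi \<le> \<theta> \<and> \<theta> \<le> pi \<longrightarrow>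
       div_z (hadamard f (\<lambda>w. (w - phi_nc (exp (\<i> * of_real \<theta>)) * (w - w^2)) / (1 - w)^2)) z \<noteq> 0)"
proof -
  have f: "f holomorphic_on ball 0 1" "f 0 = 0" "deriv f 0 = 1" using assms by (auto simp: classA_def)
  define p where "p = pz f"
  have p0: "p 0 = 1" by (simp add: p_def pz_def)
  have ph: "p holomorphic_on ball 0 1" unfolding p_def by (rule pz_holo[OF assms])
  have dfh: "deriv f holomorphic_on ball 0 1" using f(1) by (rule holomorphic_deriv) simp
  have "(\<forall>z\<in>ball 0 1. \<forall>\<theta>::real. -pi \<le> \<theta> \<and> \<theta> \<le> pi \<longrightarrow>
       div_z (hadamard f (\<lambda>w. (w - phi_nc (exp (\<i> * of_real \<theta>)) * (w - w^2)) / (1 - w)^2)) z \<noteq> 0)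
    \<longleftrightarrow> (\<forall>z\<in>ball 0 1. \<forall>w. norm w = 1 \<longrightarrow> deriv f z \<noteq> phi_nc w * p z)" (is "?L \<longleftrightarrow> ?R")
  proof
    assume L: ?L
    show ?R
    proof (intro ballI allI impI)
      fix z w assume z: "z \<in> ball (0::complex) 1" and w: "norm (w::complex) = 1"
      obtain t where t: "-pi \<le> t" "t \<le> pi" "w = exp (\<i> * of_real t)" using boundary_theta[OF w] by blast
      show "deriv f z \<noteq> phi_nc w * p z"
        using L[rule_format, OF z, of t] t K_eq[OF assms z] by (simp add: p_def)
    qed
  next
    assume R: ?R
    show ?L
    proof (intro ballI allI impI)
      fix z t assume z: "z \<in> ball (0::complex) 1" and t: "-pi \<le> t \<and> t \<le> pi"
      have "norm (exp (\<i> * complex_of_real t)) = 1" by (simp add: norm_exp_i_times)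
      then show "div_z (hadamard f (\<lambda>w. (w - phi_nc (exp (\<i> * of_real t)) * (w - w^2)) / (1 - w)^2)) z \<noteq> 0"
        using R z K_eq[OF assms z] by (simp add: p_def)
    qed
  qed
  moreover have "f \<in> S_star_nc \<longleftrightarrow> (\<forall>z\<in>ball 0 1. \<forall>w. norm w = 1 \<longrightarrow> deriv f z \<noteq> phi_nc w * p z)"
  proof
    assume S: "f \<in> S_star_nc"
    then obtain \<omega> where om: "\<omega> holomorphic_on ball 0 1" "\<omega> ` ball 0 1 \<subseteq> ball 0 1" "\<omega> 0 = 0"
        "\<And>z. z \<in> ball 0 1 \<Longrightarrow> logderiv_quot f z = phi_nc (\<omega> z)"
      by (auto simp: S_star_nc_def subord_def)
    show "\<forall>z\<in>ball 0 1. \<forall>w. norm w = 1 \<longrightarrow> deriv f z \<noteq> phi_nc w * p z"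
    proof (intro ballI allI impI notI)
      fix z w assume z: "z \<in> ball (0::complex) 1" and w: "norm w = 1" and eq: "deriv f z = phi_nc w * p z"
      have "\<omega> z \<in> ball 0 1" using om(2) z by blast
      then have oz: "norm (\<omega> z) < 1" by simp
      show False
      proof (cases "p z = 0")
        case True
        then have "z \<noteq> 0" using p0 by auto
        have "f z = 0" using f_pz[of f z, OF f(2)] True by (simp add: p_def)
        then have "logderiv_quot f z = 0" using \<open>z \<noteq> 0\<close> by (simp add: logderiv_quot_def)
        then show False using om(4)[OF z] phi_ne0[OF oz] by simp
      next
        case False
        then have "logderiv_quot f z = phi_nc w" using logderiv_pz[OF assms z] eq by (simp add: p_def)
        then have "phi_nc (\<omega> z) = phi_nc w" using om(4)[OF z] by simp
        then have "\<omega> z = w" using inj_onD[OF phi_inj] oz w by simp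
        then show False using oz w by simp
      qed
    qed
  next
    assume R: "\<forall>z\<in>ball 0 1. \<forall>w. norm w = 1 \<longrightarrow> deriv f z \<noteq> phi_nc w * p z"
    define Dk where "Dk = ball (0::complex) 1"
    define Q where "Q z = deriv f z / p z" for z
    define Om where "Om = phi_nc ` Dk"
    define Kc where "Kc = phi_nc ` cball 0 1"
    have phic: "continuous_on (cball 0 1) phi_nc"
      by (rule holomorphic_on_imp_continuous_on, rule holomorphic_on_subset[OF phi_holo]) auto
    have "compact Kc" unfolding Kc_def by (rule compact_continuous_image[OF phic]) simp
    then have Kcc: "closed Kc" and "bounded Kc" by (auto intro: compact_imp_closed compact_imp_bounded)
    then obtain B where B: "B > 0" "\<And>u. u \<in> Kc \<Longrightarrow> norm u \<le> B" by (auto simp: bounded_pos)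
    have injD: "inj_on phi_nc Dk" by (rule inj_on_subset[OF phi_inj]) (auto simp: Dk_def)
    have phD: "phi_nc holomorphic_on Dk" by (rule holomorphic_on_subset[OF phi_holo]) (auto simp: Dk_def)
    have openOm: "open Om" unfolding Om_def by (rule open_mapping_thm3[OF phD _ injD]) (simp add: Dk_def)
    have OmK: "Om \<subseteq> Kc" unfolding Om_def Kc_def Dk_def by auto
    have pc: "continuous_on Dk p" using ph by (simp add: Dk_def holomorphic_on_imp_continuous_on)
    have dfc: "continuous_on Dk (deriv f)" using dfh by (simp add: Dk_def holomorphic_on_imp_continuous_on)
    define D' where "D' = Dk \<inter> p -` (- {0})"
    have openD': "open D'" unfolding D'_def by (rule continuous_open_preimage[OF pc]) (auto simp: Dk_def)
    have Qc: "continuous_on D' Q" unfolding Q_def[abs_def]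
      by (intro continuous_intros continuous_on_subset[OF pc] continuous_on_subset[OF dfc]) (auto simp: D'_def)
    define U where "U = {z \<in> Dk. p z \<noteq> 0 \<and> Q z \<in> Om}"
    have "U = D' \<inter> Q -` Om" by (auto simp: U_def D'_def)
    then have openU: "open U" using continuous_open_preimage[OF Qc openD' openOm] by simp
    have NK: "Q z \<notin> Kc" if z: "z \<in> Dk" "p z \<noteq> 0" "Q z \<notin> Om" for z
    proof
      assume "Q z \<in> Kc"
      then obtain u where u: "u \<in> cball 0 1" "Q z = phi_nc u" by (auto simp: Kc_def)
      show False
      proof (cases "norm u = 1")
        case True
        then have "deriv f z \<noteq> phi_nc u * p z" using R z(1) by (auto simp: Dk_def)
        then show False using u(2) z(2) by (simp add: Q_def field_simps)
      next
        case False
        then have "u \<in> Dk" using u(1) by (auto simp: Dk_def)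
        then show False using u(2) z(3) by (auto simp: Om_def)
      qed
    qed
    have openV: "open (Dk - U)"
    proof (subst open_subopen, intro ballI)
      fix z assume z: "z \<in> Dk - U"
      show "\<exists>T. open T \<and> z \<in> T \<and> T \<subseteq> Dk - U"
      proof (cases "p z = 0")
        case False
        then have zQ: "Q z \<notin> Om" using z by (auto simp: U_def)
        define T where "T = D' \<inter> Q -` (- Kc)"
        have "open T" unfolding T_def using Kcc by (intro continuous_open_preimage[OF Qc openD']) auto
        moreover have "z \<in> T" using NK[of z] z False zQ by (auto simp: T_def D'_def)
        moreover have "T \<subseteq> Dk - U" using OmK by (auto simp: T_def D'_def U_def)
        ultimately show ?thesis by blast
      next
        case True
        then have "z \<noteq> 0" using p0 by auto
        have zD: "z \<in> Dk" using z by simp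
        have "deriv f z \<noteq> phi_nc 1 * p z" using R zD by (auto simp: Dk_def)
        then have a0: "deriv f z \<noteq> 0" using True by simp
        define a where "a = norm (deriv f z)"
        have apos: "a > 0" using a0 by (simp add: a_def)
        define T1 where "T1 = Dk \<inter> deriv f -` {v. norm v > a/2}"
        define T2 where "T2 = Dk \<inter> p -` {v. norm v < a/(2*(B+1))}"
        have o1: "open {v::complex. a/2 < norm v}"
          by (intro open_Collect_less continuous_intros)
        have o2: "open {v::complex. norm v < a/(2*(B+1))}"
          by (intro open_Collect_less continuous_intros)
        have oD: "open Dk" by (simp add: Dk_def)
        have "open T1" unfolding T1_def by (rule continuous_open_preimage[OF dfc oD o1])
        moreover have "open T2" unfolding T2_def by (rule continuous_open_preimage[OF pc oD o2])
        ultimately have "open (T1 \<inter> T2)" by auto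
        moreover have "z \<in> T1 \<inter> T2" using zD True apos B(1) by (auto simp: T1_def T2_def a_def)
        moreover have "T1 \<inter> T2 \<subseteq> Dk - U"
        proof
          fix v assume v: "v \<in> T1 \<inter> T2"
          have v1: "norm (deriv f v) > a/2" "norm (p v) < a/(2*(B+1))" "v \<in> Dk"
            using v by (auto simp: T1_def T2_def)
          have "v \<notin> U"
          proof
            assume "v \<in> U"
            then have pv: "p v \<noteq> 0" "Q v \<in> Om" by (auto simp: U_def)
            then have "norm (Q v) \<le> B" using B(2) OmK by auto
            moreover have "norm (Q v) > B + 1"
            proof -
              have np: "norm (p v) > 0" using pv by simp
              have "norm (p v) * (2*(B+1)) < a" using v1(2) B(1) by (simp add: field_simps)
              then have "(B + 1) * norm (p v) < norm (deriv f v)" using v1(1) by (simp add: field_simps)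
              then show ?thesis using np by (simp add: Q_def norm_divide pos_less_divide_eq)
            qed
            ultimately show False by simp
          qed
          then show "v \<in> Dk - U" using v1(3) by simp
        qed
        ultimately show ?thesis by blast
      qed
    qed
    have Q0: "Q 0 = 1" using f(3) p0 by (simp add: Q_def)
    have "0 \<in> U" using Q0 p0 phi0 by (auto simp: U_def Om_def Dk_def image_iff intro!: bexI[of _ 0])
    then have "(Dk - U) \<inter> Dk = {}"
      using connectedD[OF _ openU openV, of Dk] by (auto simp: Dk_def)
    then have allU: "\<And>z. z \<in> Dk \<Longrightarrow> z \<in> U" by blast
    then have pnz: "\<And>z. z \<in> Dk \<Longrightarrow> p z \<noteq> 0" and QOm: "\<And>z. z \<in> Dk \<Longrightarrow> Q z \<in> Om"
      by (auto simp: U_def)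
    obtain \<psi> where psi: "\<psi> holomorphic_on (phi_nc ` Dk)" "\<And>z. z \<in> Dk \<Longrightarrow> \<psi> (phi_nc z) = z"
    proof -
      have "open Dk" by (simp add: Dk_def)
      from holomorphic_has_inverse[OF phD this injD] obtain g where
        "g holomorphic_on (phi_nc ` Dk)" "\<And>z. z \<in> Dk \<Longrightarrow> g (phi_nc z) = z" by metis
      then show ?thesis using that by blast
    qed
    have Qh: "Q holomorphic_on Dk" unfolding Q_def[abs_def]
      using holomorphic_on_divide[OF dfh ph] pnz by (auto simp: Dk_def)
    have "(\<psi> \<circ> Q) holomorphic_on Dk"
      by (rule holomorphic_on_compose_gen[OF Qh psi(1)]) (use QOm in \<open>auto simp: Om_def\<close>)
    moreover have "(\<psi> \<circ> Q) ` Dk \<subseteq> Dk"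
    proof
      fix v assume "v \<in> (\<psi> \<circ> Q) ` Dk"
      then obtain z where z: "z \<in> Dk" "v = \<psi> (Q z)" by auto
      obtain u where "u \<in> Dk" "Q z = phi_nc u" using QOm[OF z(1)] by (auto simp: Om_def)
      then show "v \<in> Dk" using z psi(2) by simp
    qed
    moreover have "(\<psi> \<circ> Q) 0 = 0" using Q0 psi(2)[of 0] phi0 by (simp add: Dk_def)
    moreover have "logderiv_quot f z = phi_nc ((\<psi> \<circ> Q) z)" if z: "z \<in> Dk" for z
    proof -
      obtain u where u: "u \<in> Dk" "Q z = phi_nc u" using QOm[OF z] by (auto simp: Om_def)
      have "logderiv_quot f z = Q z"
        using logderiv_pz[OF assms _ pnz[OF z, unfolded p_def]] z by (simp add: Q_def p_def Dk_def)
      then show ?thesis using u psi(2) by simp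
    qed
    ultimately show "f \<in> S_star_nc" using assms unfolding S_star_nc_def subord_def Dk_def by blast
  qed
  ultimately show ?thesis by simp
qed

end
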